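(* For a quasi-pseudometric space $(X,d)$ the following are equivalent, where for a function $\varphi:X\to\mathbb{R}\cup\{\infty\}$ and $x\in X$ we write $S(x)=\{y\in X:\varphi(y)+d(y,x)\le\varphi(x)\}$: 1. $(X,d)$ is sequentially right $K$-complete. 2. For every proper bounded below nearly lower semicontinuous function $\varphi:X\to\mathbb{R}\cup\{\infty\}$ there exists $z\in X$ such that $\varphi(x)=\varphi(z)$ for all $x\in S(z)$. 3. Every proper bounded below nearly lower semicontinuous function $\varphi:X\to\mathbb{R}\cup\{\infty\}$ such that for every $x\in X$ with $\varphi(x)>\inf\varphi(X)$ there exists $y\in S(x)$ with $\varphi(y)<\varphi(x)$, attains its minimum on $X$. 4. For every proper bounded below nearly lower semicontinuous function $\varphi:X\to\mathbb{R}\cup\{\infty\}$ and every mapping $T:X\to X$ with $Tx\in S(x)$ for all $x\in X$, there exists $z\in X$ with $\varphi(Tz)=\varphi(z)$.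
   Context: A quasi-pseudometric on $X$ is $d:X\times X\to[0,\infty)$ with $d(x,x)=0$ and $d(x,z)\le d(x,y)+d(y,z)$ (no symmetry). Topology $\tau_d$: neighbourhood base at $x$ given by $\{y:d(x,y)<r\}$, $r>0$; $x_n\to x$ iff $d(x,x_n)\to0$. A sequence $(x_n)$ is right $K$-Cauchy if for every $\varepsilon>0$ there is $n_\varepsilon$ with $d(x_{n+k},x_n)<\varepsilon$ for all $n\ge n_\varepsilon$, $k\in\mathbb{N}$; $X$ is sequentially right $K$-complete if every right $K$-Cauchy sequence converges. $\varphi$ is proper if finite somewhere; nearly lower semicontinuous if $\varphi(x)\le\liminf_n\varphi(x_n)$ for every sequence with pairwise distinct terms converging to $x$. *)

theory Defs
  imports "HOL-Analysis.Analysis"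
begin

definition quasi_pseudometric :: "'a set \<Rightarrow> ('a \<Rightarrow> 'a \<Rightarrow> real) \<Rightarrow> bool" where
  "quasi_pseudometric X d \<longleftrightarrow>
     (\<forall>x\<in>X. \<forall>y\<in>X. 0 \<le> d x y) \<and> (\<forall>x\<in>X. d x x = 0) \<and>
     (\<forall>x\<in>X. \<forall>y\<in>X. \<forall>z\<in>X. d x z \<le> d x y + d y z)"

definition qconv :: "('a \<Rightarrow> 'a \<Rightarrow> real) \<Rightarrow> (nat \<Rightarrow> 'a) \<Rightarrow> 'a \<Rightarrow> bool" where
  "qconv d s x \<longleftrightarrow> ((\<lambda>n. d x (s n)) \<longlongrightarrow> 0) sequentially"

definition right_K_Cauchy :: "('a \<Rightarrow> 'a \<Rightarrow> real) \<Rightarrow> (nat \<Rightarrow> 'a) \<Rightarrow> bool" where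
  "right_K_Cauchy d s \<longleftrightarrow>
     (\<forall>\<epsilon>>0. \<exists>N. \<forall>n\<ge>N. \<forall>k. d (s (n + k)) (s n) < \<epsilon>)"

definition seq_right_K_complete :: "'a set \<Rightarrow> ('a \<Rightarrow> 'a \<Rightarrow> real) \<Rightarrow> bool" where
  "seq_right_K_complete X d \<longleftrightarrow>
     (\<forall>s. range s \<subseteq> X \<longrightarrow> right_K_Cauchy d s \<longrightarrow> (\<exists>x\<in>X. qconv d s x))"

text \<open>Functions X -> R \<union> {\<infinity>}, represented as ereal-valued functions never equal to -\<infinity> on X.\<close>
definition proper_fun :: "'a set \<Rightarrow> ('a \<Rightarrow> ereal) \<Rightarrow> bool" where
  "proper_fun X \<phi> \<longleftrightarrow> (\<forall>x\<in>X. \<phi> x \<noteq> -\<infinity>) \<and> (\<exists>x\<in>X. \<phi> x \<noteq> \<infinity>)"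

definition bounded_below_fun :: "'a set \<Rightarrow> ('a \<Rightarrow> ereal) \<Rightarrow> bool" where
  "bounded_below_fun X \<phi> \<longleftrightarrow> (\<exists>c::real. \<forall>x\<in>X. ereal c \<le> \<phi> x)"

definition nearly_lsc :: "'a set \<Rightarrow> ('a \<Rightarrow> 'a \<Rightarrow> real) \<Rightarrow> ('a \<Rightarrow> ereal) \<Rightarrow> bool" where
  "nearly_lsc X d \<phi> \<longleftrightarrow>
     (\<forall>s x. range s \<subseteq> X \<longrightarrow> x \<in> X \<longrightarrow> inj s \<longrightarrow> qconv d s x \<longrightarrow>
        \<phi> x \<le> liminf (\<lambda>n. \<phi> (s n)))"

definition Sset :: "'a set \<Rightarrow> ('a \<Rightarrow> 'a \<Rightarrow> real) \<Rightarrow> ('a \<Rightarrow> ereal) \<Rightarrow> 'a \<Rightarrow> 'a set" where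
  "Sset X d \<phi> x = {y\<in>X. \<phi> y + ereal (d y x) \<le> \<phi> x}"

definition admissible :: "'a set \<Rightarrow> ('a \<Rightarrow> 'a \<Rightarrow> real) \<Rightarrow> ('a \<Rightarrow> ereal) \<Rightarrow> bool" where
  "admissible X d \<phi> \<longleftrightarrow> proper_fun X \<phi> \<and> bounded_below_fun X \<phi> \<and> nearly_lsc X d \<phi>"

end

theory Submission
  imports Defs
begin

lemma S_fin:
  assumes qpm: "quasi_pseudometric X d" and z: "z \<in> X" and bz: "\<phi> z = ereal b"
    and pr: "proper_fun X \<phi>"
  shows "y \<in> Sset X d \<phi> z \<longleftrightarrow> y \<in> X \<and> (\<exists>a. \<phi> y = ereal a \<and> a + d y z \<le> b)"
proof
  assume y: "y \<in> Sset X d \<phi> z"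
  hence yX: "y \<in> X" and le: "\<phi> y + ereal (d y z) \<le> \<phi> z" by (auto simp: Sset_def)
  have "\<phi> y \<noteq> -\<infinity>" using pr yX by (auto simp: proper_fun_def)
  then show "y \<in> X \<and> (\<exists>a. \<phi> y = ereal a \<and> a + d y z \<le> b)"
    using le yX bz by (cases "\<phi> y") auto
next
  assume "y \<in> X \<and> (\<exists>a. \<phi> y = ereal a \<and> a + d y z \<le> b)"
  then show "y \<in> Sset X d \<phi> z" using bz by (auto simp: Sset_def)
qed

lemma partA:
  assumes qpm: "quasi_pseudometric X d" and P1: "seq_right_K_complete X d"
    and adm: "admissible X d \<phi>"
  shows "\<exists>z\<in>X. \<forall>x\<in>Sset X d \<phi> z. \<phi> x = \<phi> z"
proof (rule ccontr)
  assume H: "\<not> ?thesis"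
  from adm obtain c where c: "\<forall>x\<in>X. ereal c \<le> \<phi> x"
    by (auto simp: admissible_def bounded_below_fun_def)
  from adm have pr: "proper_fun X \<phi>" and nl: "nearly_lsc X d \<phi>"
    by (auto simp: admissible_def)
  from pr obtain x0 where x0: "x0 \<in> X" "\<phi> x0 \<noteq> \<infinity>" by (auto simp: proper_fun_def)
  have dnn: "\<And>x y. x\<in>X \<Longrightarrow> y\<in>X \<Longrightarrow> 0 \<le> d x y"
    and d0: "\<And>x. x\<in>X \<Longrightarrow> d x x = 0"
    and tri: "\<And>x y z. x\<in>X \<Longrightarrow> y\<in>X \<Longrightarrow> z\<in>X \<Longrightarrow> d x z \<le> d x y + d y z"
    using qpm by (auto simp: quasi_pseudometric_def)
  have fin: "\<And>x. x\<in>X \<Longrightarrow> \<phi> x \<noteq> \<infinity> \<Longrightarrow> \<exists>b. \<phi> x = ereal b"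
  proof -
    fix x assume "x \<in> X" "\<phi> x \<noteq> \<infinity>"
    moreover have "\<phi> x \<noteq> -\<infinity>" using pr \<open>x \<in> X\<close> by (auto simp: proper_fun_def)
    ultimately show "\<exists>b. \<phi> x = ereal b" by (cases "\<phi> x") auto
  qed
  have Sle: "y\<in>X \<and> \<phi> y \<le> \<phi> z \<and> \<phi> y \<noteq> \<infinity>"
    if hz: "z\<in>X" "\<phi> z \<noteq> \<infinity>" "y \<in> Sset X d \<phi> z" for z y
  proof -
    obtain b where b: "\<phi> z = ereal b" using fin hz by blast
    from hz(3) S_fin[OF qpm hz(1) b pr] obtain a where
      "y \<in> X" "\<phi> y = ereal a" "a + d y z \<le> b" by auto
    moreover have "0 \<le> d y z" using dnn hz(1) \<open>y \<in> X\<close> by auto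
    ultimately show ?thesis using b by auto
  qed
  have Strans: "y \<in> Sset X d \<phi> z"
    if hz: "z \<in> X" "\<phi> z \<noteq> \<infinity>" "z' \<in> Sset X d \<phi> z" "y \<in> Sset X d \<phi> z'" for z z' y
  proof -
    obtain b where b: "\<phi> z = ereal b" using fin hz by blast
    from hz(3) S_fin[OF qpm hz(1) b pr] obtain a where
      z': "z' \<in> X" "\<phi> z' = ereal a" "a + d z' z \<le> b" by auto
    from hz(4) S_fin[OF qpm z'(1) z'(2) pr] obtain e where
      y: "y \<in> X" "\<phi> y = ereal e" "e + d y z' \<le> a" by auto
    have "d y z \<le> d y z' + d z' z" using tri y(1) z'(1) hz(1) by auto
    then show ?thesis using S_fin[OF qpm hz(1) b pr] y z' by auto
  qed
  have step: "\<exists>y\<in>Sset X d \<phi> z. \<phi> y < \<phi> z \<and>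
      \<phi> y < (INF w\<in>Sset X d \<phi> z. \<phi> w) + ereal ((1/2)^n)"
    if z: "z\<in>X" "\<phi> z \<noteq> \<infinity>" for z n
  proof -
    from H z obtain y where y: "y \<in> Sset X d \<phi> z" "\<phi> y \<noteq> \<phi> z" by auto
    with Sle[OF z y(1)] have yl: "\<phi> y < \<phi> z" by (simp add: order_less_le)
    define m where "m = (INF w\<in>Sset X d \<phi> z. \<phi> w)"
    have "m \<le> \<phi> y" unfolding m_def using y(1) by (rule INF_lower)
    hence mlt: "m < \<phi> z" using yl by auto
    have "ereal c \<le> m" unfolding m_def
      by (rule INF_greatest) (use c Sle[OF z] in auto)
    then obtain mm where mm: "m = ereal mm" using mlt by (cases m) auto
    have "m < min (\<phi> z) (m + ereal ((1/2)^n))" using mlt mm by simp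
    then obtain y' where "y' \<in> Sset X d \<phi> z" "\<phi> y' < min (\<phi> z) (m + ereal ((1/2)^n))"
      unfolding m_def using INF_less_iff by (metis m_def)
    then show ?thesis unfolding m_def by auto
  qed
  have "\<forall>zn. \<exists>y. fst zn \<in> X \<and> \<phi> (fst zn) \<noteq> \<infinity> \<longrightarrow> y \<in> Sset X d \<phi> (fst zn) \<and> \<phi> y < \<phi> (fst zn) \<and>
      \<phi> y < (INF w\<in>Sset X d \<phi> (fst zn). \<phi> w) + ereal ((1/2)^(snd zn))"
    using step by blast
  then obtain f where f: "\<And>zn. fst zn \<in> X \<Longrightarrow> \<phi> (fst zn) \<noteq> \<infinity> \<Longrightarrow> f zn \<in> Sset X d \<phi> (fst zn) \<and> \<phi> (f zn) < \<phi> (fst zn) \<and>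
      \<phi> (f zn) < (INF w\<in>Sset X d \<phi> (fst zn). \<phi> w) + ereal ((1/2)^(snd zn))"
    by metis
  define x where "x = rec_nat x0 (\<lambda>n xn. f (xn, n))"
  have xz: "x 0 = x0" and xs: "\<And>n. x (Suc n) = f (x n, n)" by (simp_all add: x_def)
  have inv: "x n \<in> X \<and> \<phi> (x n) \<noteq> \<infinity>" for n
  proof (induction n)
    case 0 then show ?case using x0 xz by simp
  next
    case (Suc n)
    then show ?case using f[of "(x n, n)"] Sle[of "x n" "x (Suc n)"] xs by auto
  qed
  have xS: "x (Suc n) \<in> Sset X d \<phi> (x n)"
    and xlt: "\<phi> (x (Suc n)) < \<phi> (x n)"
    and xinf: "\<phi> (x (Suc n)) < (INF w\<in>Sset X d \<phi> (x n). \<phi> w) + ereal ((1/2)^n)" for n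
    using f[of "(x n, n)"] inv[of n] xs by auto
  define a where "a n = real_of_ereal (\<phi> (x n))" for n
  have phia: "\<phi> (x n) = ereal (a n)" for n
    using fin[of "x n"] inv[of n] unfolding a_def by auto
  have xSk: "x (n+k) \<in> Sset X d \<phi> (x n)" for n k
  proof (induction k)
    case 0 then show ?case using inv[of n] d0[of "x n"] by (auto simp: Sset_def)
  next
    case (Suc k)
    then show ?case using Strans[of "x n" "x (n+k)" "x (n + Suc k)"] inv[of n] xS[of "n+k"] by auto
  qed
  have ak: "a (n+k) + d (x (n+k)) (x n) \<le> a n" for n k
    using S_fin[OF qpm _ phia[of n] pr, of "x (n+k)"] xSk[of n k] inv[of n] phia[of "n+k"] by auto
  have aSuc: "a (Suc n) < a n" for n using xlt[of n] phia[of n] phia[of "Suc n"] by simp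
  have ac: "c \<le> a n" for n using c inv[of n] phia[of n] by force
  have "decseq a" using aSuc by (simp add: decseq_Suc_iff less_imp_le)
  then obtain L where aL: "a \<longlonglongrightarrow> L" and La: "\<forall>i. L \<le> a i"
    using ac by (metis decseq_convergent)
  have cauchy: "right_K_Cauchy d x"
    unfolding right_K_Cauchy_def
  proof (intro allI impI)
    fix \<epsilon> :: real assume "\<epsilon> > 0"
    with aL obtain N where N: "\<forall>n\<ge>N. norm (a n - L) < \<epsilon>" by (auto simp: LIMSEQ_iff)
    show "\<exists>N. \<forall>n\<ge>N. \<forall>k. d (x (n + k)) (x n) < \<epsilon>"
    proof (intro exI allI impI)
      fix n k assume "N \<le> n"
      then have "a n - L < \<epsilon>" using N by auto
      then show "d (x (n + k)) (x n) < \<epsilon>" using ak[of n k] La[rule_format, of "n+k"] by linarith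
    qed
  qed
  have "range x \<subseteq> X" using inv by auto
  with P1 cauchy obtain z where z: "z \<in> X" "qconv d x z"
    unfolding seq_right_K_complete_def by blast
  have alt: "i < j \<Longrightarrow> a j < a i" for i j
  proof -
    assume "i < j"
    then have "a j \<le> a (Suc i)" using \<open>decseq a\<close> by (simp add: decseq_def)
    then show ?thesis using aSuc[of i] by linarith
  qed
  have "inj x"
  proof (rule injI)
    fix i j assume "x i = x j"
    then have "a i = a j" by (simp add: a_def)
    then show "i = j" using alt by (metis less_irrefl linorder_neqE_nat)
  qed
  have "\<phi> z \<le> liminf (\<lambda>n. \<phi> (x n))"
    using nl z \<open>inj x\<close> \<open>range x \<subseteq> X\<close> unfolding nearly_lsc_def by blast
  moreover have "liminf (\<lambda>n. \<phi> (x n)) = ereal L"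
    by (rule lim_imp_Liminf) (auto simp: phia aL)
  ultimately have zL: "\<phi> z \<le> ereal L" by simp
  have "\<phi> z \<noteq> -\<infinity>" using pr z by (auto simp: proper_fun_def)
  then obtain b where b: "\<phi> z = ereal b" "b \<le> L" using zL by (cases "\<phi> z") auto
  have zS: "z \<in> Sset X d \<phi> (x n)" for n
  proof -
    have lim: "(\<lambda>m. d z (x m) + (a n - a m)) \<longlonglongrightarrow> 0 + (a n - L)"
      using z(2) aL unfolding qconv_def by (intro tendsto_intros) auto
    have "d z (x n) \<le> 0 + (a n - L)"
    proof (rule LIMSEQ_le_const[OF lim], intro exI allI impI)
      fix m assume "n \<le> m"
      then have "m = n + (m - n)" by simp
      then have "a m + d (x m) (x n) \<le> a n" using ak[of n "m-n"] by metis
      moreover have "d z (x n) \<le> d z (x m) + d (x m) (x n)" using tri z(1) inv by auto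
      ultimately show "d z (x n) \<le> d z (x m) + (a n - a m)" by linarith
    qed
    then show ?thesis using S_fin[OF qpm _ phia[of n] pr, of z] z(1) b inv[of n] by auto
  qed
  from H z obtain y where y: "y \<in> Sset X d \<phi> z" "\<phi> y \<noteq> \<phi> z" by auto
  from S_fin[OF qpm z(1) b(1) pr] y(1) obtain e where
    e: "y \<in> X" "\<phi> y = ereal e" "e + d y z \<le> b" by auto
  have "0 \<le> d y z" using dnn e(1) z(1) by auto
  then have elt: "e < L" using e y(2) b by auto
  have yS: "y \<in> Sset X d \<phi> (x n)" for n
    using Strans[of "x n" z y] inv[of n] zS[of n] y(1) by auto
  have "L < e + (1/2)^n" for n
  proof -
    have "(INF w\<in>Sset X d \<phi> (x n). \<phi> w) \<le> \<phi> y" using yS[of n] by (rule INF_lower)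
    then have "ereal (a (Suc n)) < ereal e + ereal ((1/2)^n)"
      using xinf[of n] phia[of "Suc n"] e(2)
      by (metis add_right_mono order_less_le_trans)
    then have "a (Suc n) < e + (1/2)^n" by simp
    then show ?thesis using La by (metis order_le_less_trans)
  qed
  moreover obtain n where "(1/2::real)^n < L - e" using real_arch_pow_inv[of "L - e" "1/2"] elt by auto
  ultimately show False by (metis add.commute less_diff_eq less_irrefl order_less_trans)
qed

lemma partB:
  assumes qpm: "quasi_pseudometric X d" and nc: "\<not> seq_right_K_complete X d"
  shows "\<exists>s. range s \<subseteq> X \<and> inj s \<and> (\<forall>j. d (s (Suc j)) (s j) \<le> (1/2)^(Suc j)) \<and>
    (\<forall>x\<in>X. \<forall>y. inj y \<longrightarrow> qconv d y x \<longrightarrow> (\<forall>\<^sub>F m in sequentially. y m \<notin> range s))"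
proof -
  have dnn: "\<And>x y. x\<in>X \<Longrightarrow> y\<in>X \<Longrightarrow> 0 \<le> d x y"
    and tri: "\<And>x y z. x\<in>X \<Longrightarrow> y\<in>X \<Longrightarrow> z\<in>X \<Longrightarrow> d x z \<le> d x y + d y z"
    using qpm by (auto simp: quasi_pseudometric_def)
  from nc obtain t where tX: "range t \<subseteq> X" and tc: "right_K_Cauchy d t"
    and tn: "\<not> (\<exists>x\<in>X. qconv d t x)"
    unfolding seq_right_K_complete_def by blast
  have "\<forall>\<epsilon>. \<exists>N. \<epsilon> > 0 \<longrightarrow> (\<forall>n\<ge>N. \<forall>k. d (t (n+k)) (t n) < \<epsilon>)"
    using tc unfolding right_K_Cauchy_def by blast
  then obtain N where N: "\<And>\<epsilon> n k. \<epsilon> > 0 \<Longrightarrow> n \<ge> N \<epsilon> \<Longrightarrow> d (t (n+k)) (t n) < \<epsilon>"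
    by metis
  have Nle: "d (t m) (t n) < \<epsilon>" if "\<epsilon> > 0" "n \<ge> N \<epsilon>" "m \<ge> n" for \<epsilon> n m
  proof -
    have "m = n + (m - n)" using that by simp
    then show ?thesis using N[OF that(1,2), of "m - n"] by metis
  qed
  have conv: "qconv d t x" if xX: "x \<in> X" and
    H: "\<And>\<epsilon> n. \<epsilon> > 0 \<Longrightarrow> \<exists>m\<ge>n. d x (t m) < \<epsilon>" for x
    unfolding qconv_def LIMSEQ_iff
  proof (intro allI impI)
    fix \<epsilon> :: real assume e: "\<epsilon> > 0"
    show "\<exists>no. \<forall>n\<ge>no. norm (d x (t n) - 0) < \<epsilon>"
    proof (intro exI allI impI)
      fix n assume n: "n \<ge> N (\<epsilon>/2)"
      obtain m where m: "m \<ge> n" "d x (t m) < \<epsilon>/2" using H[of "\<epsilon>/2" n] e by auto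
      have "d (t m) (t n) < \<epsilon>/2" using Nle[of "\<epsilon>/2" n m] e n m by auto
      moreover have "d x (t n) \<le> d x (t m) + d (t m) (t n)" using tri[of x "t m" "t n"] xX tX by auto
      moreover have "0 \<le> d x (t n)" using dnn[of x "t n"] xX tX by auto
      ultimately show "norm (d x (t n) - 0) < \<epsilon>" using m by auto
    qed
  qed
  have finocc: "\<exists>M. \<forall>m\<ge>M. t m \<noteq> a" for a
  proof (rule ccontr)
    assume "\<not> ?thesis"
    then have inf: "\<And>M. \<exists>m\<ge>M. t m = a" by auto
    then have aX: "a \<in> X" using tX by blast
    have "qconv d t a"
    proof (rule conv[OF aX])
      fix \<epsilon> :: real and n assume e: "\<epsilon> > 0"
      obtain m where m: "m \<ge> max n (N \<epsilon>)" "t m = a" using inf by blast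
      obtain m' where m': "m' \<ge> m" "t m' = a" using inf by blast
      have "d (t m') (t m) < \<epsilon>" using Nle[of \<epsilon> m m'] e m m' by auto
      then show "\<exists>m\<ge>n. d a (t m) < \<epsilon>" using m m' by auto
    qed
    then show False using tn aX by blast
  qed
  then obtain M where M: "\<And>a m. m \<ge> M a \<Longrightarrow> t m \<noteq> a" by metis
  define r where "r = rec_nat (N (1/2)) (\<lambda>j rj. max (Suc rj) (max (N ((1/2)^(Suc (Suc j)))) (M (t rj))))"
  have r0: "r 0 = N (1/2)" and rS: "\<And>j. r (Suc j) = max (Suc (r j)) (max (N ((1/2)^(Suc (Suc j)))) (M (t (r j))))"
    by (simp_all add: r_def)
  have rN: "N ((1/2)^(Suc j)) \<le> r j" for j
    by (cases j) (simp_all add: r0 rS)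
  have sm: "strict_mono r" unfolding strict_mono_Suc_iff using rS by auto
  define s where "s j = t (r j)" for j
  have sX: "range s \<subseteq> X" using tX by (auto simp: s_def)
  have sne: "s j \<noteq> s i" if "i < j" for i j
  proof -
    have "r (Suc i) \<le> r j" using strict_mono_less_eq[OF sm] that by auto
    then have "M (t (r i)) \<le> r j" using rS[of i] by auto
    then show ?thesis using M unfolding s_def by blast
  qed
  have "inj s"
  proof (rule injI)
    fix i j assume "s i = s j"
    then show "i = j" using sne by (metis linorder_neqE_nat)
  qed
  moreover have "d (s (Suc j)) (s j) \<le> (1/2)^(Suc j)" for j
  proof -
    have "r j \<le> r (Suc j)" using rS[of j] by auto
    then have "d (t (r (Suc j))) (t (r j)) < (1/2)^(Suc j)"
      using Nle[of "(1/2)^(Suc j)" "r j" "r (Suc j)"] rN[of j] by auto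
    then show ?thesis by (simp add: s_def)
  qed
  moreover have "\<forall>\<^sub>F m in sequentially. y m \<notin> range s"
    if xX: "x \<in> X" and iy: "inj y" and qy: "qconv d y x" for x y
  proof (rule ccontr)
    assume "\<not> ?thesis"
    then have fr: "\<exists>\<^sub>F m in sequentially. y m \<in> range s" by (simp add: not_eventually)
    have "qconv d t x"
    proof (rule conv[OF xX])
      fix \<epsilon> :: real and n assume e: "\<epsilon> > 0"
      have ev1: "\<forall>\<^sub>F m in sequentially. d x (y m) < \<epsilon>"
        using qy e unfolding qconv_def by (auto dest: order_tendstoD(2))
      have "finite (y -` (t ` {..<n}))" by (rule finite_vimageI) (use iy in auto)
      then have ev2: "\<forall>\<^sub>F m in sequentially. y m \<notin> t ` {..<n}"
        unfolding cofinite_eq_sequentially[symmetric] eventually_cofinite by (simp add: vimage_def)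
      have "\<exists>\<^sub>F m in sequentially. y m \<in> range s \<and> (d x (y m) < \<epsilon> \<and> y m \<notin> t ` {..<n})"
        using frequently_eventually_frequently[OF fr eventually_conj[OF ev1 ev2]] .
      then obtain m where m: "y m \<in> range s" "d x (y m) < \<epsilon>" "y m \<notin> t ` {..<n}"
        using frequently_ex by blast
      then obtain j where j: "y m = t (r j)" by (auto simp: s_def)
      then have "r j \<ge> n" using m(3) by (metis lessThan_iff image_eqI not_le)
      then show "\<exists>m\<ge>n. d x (t m) < \<epsilon>" using m(2) j by auto
    qed
    then show False using tn xX by blast
  qed
  ultimately show ?thesis using sX by blast
qed

lemma partC:
  assumes qpm: "quasi_pseudometric X d" and sX: "range s \<subseteq> X" and injs: "inj s"
    and sd: "\<And>j. d (s (Suc j)) (s j) \<le> (1/2)^(Suc j)"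
    and key: "\<And>x y. x\<in>X \<Longrightarrow> inj y \<Longrightarrow> qconv d y x \<Longrightarrow> (\<forall>\<^sub>F m in sequentially. y m \<notin> range s)"
  defines "\<phi> \<equiv> (\<lambda>y. if y \<in> range s then ereal ((1/2)^(inv s y)) else \<infinity>)"
    and "T \<equiv> (\<lambda>y. if y \<in> range s then s (Suc (inv s y)) else s 0)"
  shows "admissible X d \<phi>" "\<forall>x\<in>X. T x \<in> Sset X d \<phi> x" "\<forall>z\<in>X. \<phi> (T z) \<noteq> \<phi> z"
    "\<forall>z\<in>X. \<phi> z > (INF w\<in>X. \<phi> w)"
proof -
  have phis: "\<phi> (s j) = ereal ((1/2)^j)" for j using injs by (simp add: \<phi>_def)
  have Ts: "T (s j) = s (Suc j)" for j using injs by (simp add: T_def)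
  have s0X: "s 0 \<in> X" using sX by auto
  have pos: "\<phi> z > 0" for z by (simp add: \<phi>_def)
  show "admissible X d \<phi>"
    unfolding admissible_def proper_fun_def bounded_below_fun_def nearly_lsc_def
  proof (intro conjI)
    show "\<forall>x\<in>X. \<phi> x \<noteq> - \<infinity>" by (simp add: \<phi>_def)
    show "\<exists>x\<in>X. \<phi> x \<noteq> \<infinity>" using s0X phis[of 0] by force
    show "\<exists>c. \<forall>x\<in>X. ereal c \<le> \<phi> x" using pos by (metis less_imp_le zero_ereal_def)
    show "\<forall>y x. range y \<subseteq> X \<longrightarrow> x \<in> X \<longrightarrow> inj y \<longrightarrow> qconv d y x \<longrightarrow> \<phi> x \<le> liminf (\<lambda>n. \<phi> (y n))"
    proof (intro allI impI)
      fix y x assume "range y \<subseteq> X" "x \<in> X" "inj y" "qconv d y x"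
      then have "\<forall>\<^sub>F m in sequentially. y m \<notin> range s" using key by blast
      then have "\<forall>\<^sub>F m in sequentially. \<phi> (y m) = \<infinity>" by (rule eventually_mono) (simp add: \<phi>_def)
      then have "((\<lambda>m. \<phi> (y m)) \<longlongrightarrow> \<infinity>) sequentially" by (rule tendsto_eventually)
      then have "liminf (\<lambda>n. \<phi> (y n)) = \<infinity>" by (intro lim_imp_Liminf) auto
      then show "\<phi> x \<le> liminf (\<lambda>n. \<phi> (y n))" by simp
    qed
  qed
  show "\<forall>x\<in>X. T x \<in> Sset X d \<phi> x"
  proof
    fix x assume xX: "x \<in> X"
    show "T x \<in> Sset X d \<phi> x"
    proof (cases "x \<in> range s")
      case True
      then obtain j where j: "x = s j" by auto
      have "ereal ((1/2)^(Suc j)) + ereal (d (s (Suc j)) (s j)) \<le> ereal ((1/2)^j)"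
        using sd[of j] by simp
      then show ?thesis using j Ts phis sX by (auto simp: Sset_def)
    next
      case False
      then show ?thesis using s0X by (simp add: Sset_def T_def \<phi>_def)
    qed
  qed
  show "\<forall>z\<in>X. \<phi> (T z) \<noteq> \<phi> z"
  proof
    fix z assume "z \<in> X"
    show "\<phi> (T z) \<noteq> \<phi> z"
    proof (cases "z \<in> range s")
      case True
      then obtain j where j: "z = s j" by auto
      then show ?thesis using Ts phis by simp
    next
      case False
      then show ?thesis using phis[of 0] by (simp add: T_def \<phi>_def)
    qed
  qed
  have "(INF w\<in>X. \<phi> w) \<le> 0"
  proof (rule ccontr)
    assume "\<not> ?thesis"
    then have "0 < (INF w\<in>X. \<phi> w)" by simp
    then obtain q where q: "0 < ereal q" "ereal q < (INF w\<in>X. \<phi> w)" using ereal_dense2 by blast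
    then have "q > 0" by simp
    then obtain j where j: "(1/2::real)^j < q" using real_arch_pow_inv[of q "1/2"] by auto
    have "(INF w\<in>X. \<phi> w) \<le> \<phi> (s j)" using sX by (intro INF_lower) auto
    moreover have "\<phi> (s j) < ereal q" using j phis[of j] by simp
    ultimately have "(INF w\<in>X. \<phi> w) < ereal q" by (rule order_le_less_trans)
    then show False using q by simp
  qed
  then show "\<forall>z\<in>X. \<phi> z > (INF w\<in>X. \<phi> w)" using pos by (meson order_le_less_trans)
qed

theorem theorem3p9:
  fixes X :: "'a set" and d :: "'a \<Rightarrow> 'a \<Rightarrow> real"
  assumes "quasi_pseudometric X d"
  defines "P1 \<equiv> seq_right_K_complete X d"
      and "P2 \<equiv> (\<forall>\<phi>. admissible X d \<phi> \<longrightarrow>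
                    (\<exists>z\<in>X. \<forall>x\<in>Sset X d \<phi> z. \<phi> x = \<phi> z))"
      and "P3 \<equiv> (\<forall>\<phi>. admissible X d \<phi> \<longrightarrow>
                    (\<forall>x\<in>X. \<phi> x > (INF w\<in>X. \<phi> w) \<longrightarrow>
                        (\<exists>y\<in>Sset X d \<phi> x. \<phi> y < \<phi> x)) \<longrightarrow>
                    (\<exists>z\<in>X. \<phi> z = (INF w\<in>X. \<phi> w)))"
      and "P4 \<equiv> (\<forall>\<phi> T. admissible X d \<phi> \<longrightarrow>
                    (\<forall>x\<in>X. T x \<in> Sset X d \<phi> x) \<longrightarrow>
                    (\<exists>z\<in>X. \<phi> (T z) = \<phi> z))"
  shows "(P1 \<longleftrightarrow> P2) \<and> (P1 \<longleftrightarrow> P3) \<and> (P1 \<longleftrightarrow> P4)"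
proof -
  have dnn: "\<And>x y. x\<in>X \<Longrightarrow> y\<in>X \<Longrightarrow> 0 \<le> d x y"
    using assms(1) by (auto simp: quasi_pseudometric_def)
  have Sle: "\<phi> y \<le> \<phi> x" if "y \<in> Sset X d \<phi> x" "x \<in> X" for \<phi> x y
  proof -
    have "y \<in> X" "\<phi> y + ereal (d y x) \<le> \<phi> x" using that by (auto simp: Sset_def)
    moreover have "\<phi> y \<le> \<phi> y + ereal (d y x)" using dnn[OF \<open>y \<in> X\<close> that(2)]
      by (metis add.right_neutral add_left_mono ereal_less_eq(5) zero_ereal_def)
    ultimately show ?thesis by auto
  qed
  have A: "P1 \<Longrightarrow> P2" unfolding P1_def P2_def using partA[OF assms(1)] by blast
  have B4: "P2 \<Longrightarrow> P4" unfolding P2_def P4_def by (metis Sset_def)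
  have B3: "P2 \<Longrightarrow> P3" unfolding P2_def P3_def
  proof (intro allI impI)
    fix \<phi> :: "'a \<Rightarrow> ereal"
    assume H: "\<forall>\<phi>. admissible X d \<phi> \<longrightarrow> (\<exists>z\<in>X. \<forall>x\<in>Sset X d \<phi> z. \<phi> x = \<phi> z)"
      and ad: "admissible X d \<phi>"
      and D: "\<forall>x\<in>X. (INF w\<in>X. \<phi> w) < \<phi> x \<longrightarrow> (\<exists>y\<in>Sset X d \<phi> x. \<phi> y < \<phi> x)"
    from H ad obtain z where z: "z \<in> X" "\<forall>x\<in>Sset X d \<phi> z. \<phi> x = \<phi> z" by blast
    have "\<not> (INF w\<in>X. \<phi> w) < \<phi> z" using D z by force
    moreover have "(INF w\<in>X. \<phi> w) \<le> \<phi> z" using z(1) by (rule INF_lower)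
    ultimately show "\<exists>z\<in>X. \<phi> z = (INF w\<in>X. \<phi> w)" using z(1) by (metis order_less_le)
  qed
  have C: "\<not> P3 \<and> \<not> P4" if "\<not> P1"
  proof -
    from partB[OF assms(1)] that obtain s where s: "range s \<subseteq> X" "inj s"
      "\<forall>j. d (s (Suc j)) (s j) \<le> (1/2)^(Suc j)"
      "\<forall>x\<in>X. \<forall>y. inj y \<longrightarrow> qconv d y x \<longrightarrow> (\<forall>\<^sub>F m in sequentially. y m \<notin> range s)"
      unfolding P1_def by blast
    define \<phi> where "\<phi> = (\<lambda>y. if y \<in> range s then ereal ((1/2)^(inv s y)) else \<infinity>)"
    define T where "T = (\<lambda>y. if y \<in> range s then s (Suc (inv s y)) else s 0)"
    have c1: "admissible X d \<phi>" "\<forall>x\<in>X. T x \<in> Sset X d \<phi> x" "\<forall>z\<in>X. \<phi> (T z) \<noteq> \<phi> z"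
      "\<forall>z\<in>X. \<phi> z > (INF w\<in>X. \<phi> w)"
      unfolding \<phi>_def T_def using partC[OF assms(1) s(1) s(2)] s(3,4) by blast+
    have "\<not> P4" unfolding P4_def using c1 by blast
    moreover have "\<not> P3" unfolding P3_def
    proof
      assume "\<forall>\<phi>. admissible X d \<phi> \<longrightarrow>
                    (\<forall>x\<in>X. \<phi> x > (INF w\<in>X. \<phi> w) \<longrightarrow>
                        (\<exists>y\<in>Sset X d \<phi> x. \<phi> y < \<phi> x)) \<longrightarrow>
                    (\<exists>z\<in>X. \<phi> z = (INF w\<in>X. \<phi> w))"
      moreover have "\<forall>x\<in>X. \<phi> x > (INF w\<in>X. \<phi> w) \<longrightarrow> (\<exists>y\<in>Sset X d \<phi> x. \<phi> y < \<phi> x)"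
      proof (intro ballI impI)
        fix x assume "x \<in> X"
        then have "T x \<in> Sset X d \<phi> x" "\<phi> (T x) \<noteq> \<phi> x" using c1 by auto
        moreover have "\<phi> (T x) \<le> \<phi> x" using Sle calculation(1) \<open>x \<in> X\<close> by blast
        ultimately show "\<exists>y\<in>Sset X d \<phi> x. \<phi> y < \<phi> x" by (auto simp: order_less_le)
      qed
      ultimately obtain z where "z \<in> X" "\<phi> z = (INF w\<in>X. \<phi> w)" using c1(1) by blast
      then show False using c1(4) by auto
    qed
    ultimately show ?thesis by blast
  qed
  show ?thesis using A B3 B4 C by blast
qed

end
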